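(* Let $F$ be a random forest and $L$ a bi-stable labelling of its explanation BAG $\mathcal{B}_F$, and let $S_L=S_{1,j_1}\times\dots\times S_{k,j_k}$ where, for each feature $X_i$, $A_{X_i\in S_{i,j_i}}$ is the feature argument of $X_i$ labelled $\mathrm{in}$ by $L$. Then for every tree $T\in F$ and every rule $r\in T$, $L(A_{T,r})=\mathrm{in}$ if and only if $r$ is the active rule in $T$ for all inputs $x\in S_L$. Furthermore, all rule arguments $A_{T,r'}$ of $T$ other than the one labelled $\mathrm{in}$ are labelled $\mathrm{out}$.
   Context: Features $X_1,\dots,X_k$ have domains $D_1,\dots,D_k$; each feature is categorical (finite domain) or numerical ($D_i\subseteq\mathbb{R}$). Inputs are $x\in D_1\times\dots\times D_k$; $\mathcal{C}$ is a finite set of class labels. Feature conditions are $X_i=v$ (categorical) or $X_i\le v$ (numerical); a feature literal is a condition or its negation. A rule $r$ is $\mathrm{prem}(r)\rightarrow\mathrm{conc}(r)$ with $\mathrm{prem}(r)$ a finite set of feature literals and $\mathrm{conc}(r)\in\mathcal{C}$. A decision tree $T$ is a finite set of rules such that every input satisfies the premise of exactly one rule of $T$, the active rule in $T$ for $x$. A random forest $F$ is a finite set of decision trees. Domain partition: for a categorical feature, the singletons $\{v\}$, $v\in D_i$; for a numerical feature with distinct thresholds $v_1<\dots<v_m$ occurring in conditions $X_i\le v$ in $F$, the sets $D_i\cap(-\infty,v_1]$, $D_i\cap(v_{j-1},v_j]$ ($2\le j\le m$), $D_i\cap(v_m,\infty)$; denote them $S_{i,1},\dots,S_{i,n_i}$.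 A BAG is $(\mathcal{A},\mathrm{Att},\mathrm{Sup})$ with $\mathcal{A}$ finite and $\mathrm{Att},\mathrm{Sup}\subseteq\mathcal{A}\times\mathcal{A}$; $\mathrm{Att}(A)=\{B:(B,A)\in\mathrm{Att}\}$, $\mathrm{Sup}(A)=\{B:(B,A)\in\mathrm{Sup}\}$. A labelling is a map $L:\mathcal{A}\to\{\mathrm{in},\mathrm{out},\mathrm{und}\}$. The attackers of $A$ dominate its supporters if $|\{B\in\mathrm{Att}(A):L(B)=\mathrm{in}\}|>|\{B\in\mathrm{Sup}(A):L(B)\ne\mathrm{out}\}|$; the supporters dominate the attackers if $|\{B\in\mathrm{Sup}(A):L(B)=\mathrm{in}\}|>|\{B\in\mathrm{Att}(A):L(B)\ne\mathrm{out}\}|$. $L$ is bi-complete if for every $A$: $L(A)=\mathrm{in}$ iff ($L(B)=\mathrm{out}$ for all $B\in\mathrm{Att}(A)$ or $A$'s supporters dominate its attackers), and $L(A)=\mathrm{out}$ iff $A$'s attackers dominate its supporters. $L$ is bi-stable if it is bi-complete and labels nothing $\mathrm{und}$ (a bi-stable labelling of $\mathcal{B}_F$ labels exactly one feature argument of each feature $\mathrm{in}$). The explanation BAG $\mathcal{B}_F$ has arguments: a class argument $A_y$ for each $y\in\mathcal{C}$; a rule argument $A_{T,r}$ for each $T\in F$, $r\in T$ (the rule arguments of $T$); a feature argument $A_{X_i\in S_{i,j}}$ for each feature $i$ and partition set $S_{i,j}$. Attacks: between any two distinct feature arguments of the same feature; from $A_{X_i\in S_{i,j}}$ to $A_{T,r}$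 whenever some literal in $\mathrm{prem}(r)$ is satisfied by no value in $S_{i,j}$; from $A_{T,r}$ to $A_y$ whenever $\mathrm{conc}(r)\ne y$. Supports: from $A_{T,r}$ to $A_y$ whenever $\mathrm{conc}(r)=y$. No other attacks or supports. *)

theory Defs
  imports Complex_Main
begin

text \<open>Feature values: categorical values (of an arbitrary type 'a) or real numbers.
  Features are indexed by 0..<k (the paper's X_1..X_k).\<close>
datatype 'a fval = Cat 'a | Num real

datatype 'a fcond = CEq nat 'a | CLe nat real

fun cond_feat :: "'a fcond \<Rightarrow> nat" where
  "cond_feat (CEq i _) = i"
| "cond_feat (CLe i _) = i"

fun cond_holds :: "'a fcond \<Rightarrow> 'a fval \<Rightarrow> bool" where
  "cond_holds (CEq _ a) v = (v = Cat a)"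
| "cond_holds (CLe _ t) v = (\<exists>r. v = Num r \<and> r \<le> t)"

text \<open>A feature literal: a condition (polarity True) or its negation (polarity False).\<close>
type_synonym 'a lit = "bool \<times> 'a fcond"

definition lit_feat :: "'a lit \<Rightarrow> nat" where
  "lit_feat l = cond_feat (snd l)"

definition lit_holds :: "'a lit \<Rightarrow> 'a fval \<Rightarrow> bool" where
  "lit_holds l v = (if fst l then cond_holds (snd l) v else \<not> cond_holds (snd l) v)"

type_synonym ('a,'c) rule = "'a lit set \<times> 'c"
type_synonym ('a,'c) tree = "('a,'c) rule set"

definition prem :: "('a,'c) rule \<Rightarrow> 'a lit set" where "prem r = fst r"
definition conc :: "('a,'c) rule \<Rightarrow> 'c" where "conc r = snd r"

definition is_input :: "nat \<Rightarrow> (nat \<Rightarrow> 'a fval set) \<Rightarrow> (nat \<Rightarrow> 'a fval) \<Rightarrow> bool" where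
  "is_input k D x \<longleftrightarrow> (\<forall>i<k. x i \<in> D i)"

definition sat_prem :: "('a,'c) rule \<Rightarrow> (nat \<Rightarrow> 'a fval) \<Rightarrow> bool" where
  "sat_prem r x \<longleftrightarrow> (\<forall>l\<in>prem r. lit_holds l (x (lit_feat l)))"

definition active_rule :: "('a,'c) tree \<Rightarrow> (nat \<Rightarrow> 'a fval) \<Rightarrow> ('a,'c) rule \<Rightarrow> bool" where
  "active_rule T x r \<longleftrightarrow> r \<in> T \<and> sat_prem r x"

definition feature_space :: "nat \<Rightarrow> (nat \<Rightarrow> bool) \<Rightarrow> (nat \<Rightarrow> 'a fval set) \<Rightarrow> bool" where
  "feature_space k num D \<longleftrightarrow> (\<forall>i<k. D i \<noteq> {} \<and>
      (num i \<longrightarrow> D i \<subseteq> range Num) \<and>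
      (\<not> num i \<longrightarrow> finite (D i) \<and> D i \<subseteq> range Cat))"

definition cond_ok :: "nat \<Rightarrow> (nat \<Rightarrow> bool) \<Rightarrow> 'a fcond \<Rightarrow> bool" where
  "cond_ok k num c \<longleftrightarrow> cond_feat c < k \<and>
      (case c of CEq i _ \<Rightarrow> \<not> num i | CLe i _ \<Rightarrow> num i)"

definition is_rule :: "nat \<Rightarrow> (nat \<Rightarrow> bool) \<Rightarrow> 'c set \<Rightarrow> ('a,'c) rule \<Rightarrow> bool" where
  "is_rule k num C r \<longleftrightarrow> finite (prem r) \<and> conc r \<in> C \<and> (\<forall>l\<in>prem r. cond_ok k num (snd l))"

definition decision_tree ::
  "nat \<Rightarrow> (nat \<Rightarrow> bool) \<Rightarrow> (nat \<Rightarrow> 'a fval set) \<Rightarrow> 'c set \<Rightarrow> ('a,'c) tree \<Rightarrow> bool" where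
  "decision_tree k num D C T \<longleftrightarrow> finite T \<and> (\<forall>r\<in>T. is_rule k num C r) \<and>
      (\<forall>x. is_input k D x \<longrightarrow> (\<exists>!r. r \<in> T \<and> sat_prem r x))"

definition random_forest ::
  "nat \<Rightarrow> (nat \<Rightarrow> bool) \<Rightarrow> (nat \<Rightarrow> 'a fval set) \<Rightarrow> 'c set \<Rightarrow> ('a,'c) tree set \<Rightarrow> bool" where
  "random_forest k num D C F \<longleftrightarrow> finite F \<and> (\<forall>T\<in>F. decision_tree k num D C T)"

definition thresholds :: "('a,'c) tree set \<Rightarrow> nat \<Rightarrow> real set" where
  "thresholds F i = {t. \<exists>T\<in>F. \<exists>r\<in>T. \<exists>p. (p, CLe i t) \<in> prem r}"

definition num_cells :: "(nat \<Rightarrow> 'a fval set) \<Rightarrow> ('a,'c) tree set \<Rightarrow> nat \<Rightarrow> 'a fval set set" where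
  "num_cells D F i = (let vs = sorted_list_of_set (thresholds F i) in
     if vs = [] then {D i}
     else {D i \<inter> Num ` {..hd vs}}
        \<union> {D i \<inter> Num ` {vs ! (j - 1)<..vs ! j} | j. 1 \<le> j \<and> j < length vs}
        \<union> {D i \<inter> Num ` {last vs<..}})"

text \<open>The partition sets S_{i,j} of feature i (empty pieces are not blocks of a partition).\<close>
definition part_sets ::
  "(nat \<Rightarrow> bool) \<Rightarrow> (nat \<Rightarrow> 'a fval set) \<Rightarrow> ('a,'c) tree set \<Rightarrow> nat \<Rightarrow> 'a fval set set" where
  "part_sets num D F i =
     {S \<in> (if num i then num_cells D F i else {{v} | v. v \<in> D i}). S \<noteq> {}}"

datatype label = In | Out | Und

definition attackers :: "('b \<times> 'b) set \<Rightarrow> 'b \<Rightarrow> 'b set" where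
  "attackers R A = {B. (B, A) \<in> R}"

definition att_dominate :: "('b \<times> 'b) set \<Rightarrow> ('b \<times> 'b) set \<Rightarrow> ('b \<Rightarrow> label) \<Rightarrow> 'b \<Rightarrow> bool" where
  "att_dominate At Sp L A \<longleftrightarrow>
     card {B \<in> attackers At A. L B = In} > card {B \<in> attackers Sp A. L B \<noteq> Out}"

definition sup_dominate :: "('b \<times> 'b) set \<Rightarrow> ('b \<times> 'b) set \<Rightarrow> ('b \<Rightarrow> label) \<Rightarrow> 'b \<Rightarrow> bool" where
  "sup_dominate At Sp L A \<longleftrightarrow>
     card {B \<in> attackers Sp A. L B = In} > card {B \<in> attackers At A. L B \<noteq> Out}"

definition bi_complete :: "'b set \<Rightarrow> ('b \<times> 'b) set \<Rightarrow> ('b \<times> 'b) set \<Rightarrow> ('b \<Rightarrow> label) \<Rightarrow> bool" where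
  "bi_complete Args At Sp L \<longleftrightarrow> (\<forall>A\<in>Args.
      (L A = In \<longleftrightarrow> ((\<forall>B\<in>attackers At A. L B = Out) \<or> sup_dominate At Sp L A)) \<and>
      (L A = Out \<longleftrightarrow> att_dominate At Sp L A))"

definition bi_stable :: "'b set \<Rightarrow> ('b \<times> 'b) set \<Rightarrow> ('b \<times> 'b) set \<Rightarrow> ('b \<Rightarrow> label) \<Rightarrow> bool" where
  "bi_stable Args At Sp L \<longleftrightarrow> bi_complete Args At Sp L \<and> (\<forall>A\<in>Args. L A \<noteq> Und)"

datatype ('a,'c) arg =
    ClassArg 'c
  | RuleArg "('a,'c) tree" "('a,'c) rule"
  | FeatArg nat "'a fval set"

definition ex_args ::
  "nat \<Rightarrow> (nat \<Rightarrow> bool) \<Rightarrow> (nat \<Rightarrow> 'a fval set) \<Rightarrow> 'c set \<Rightarrow> ('a,'c) tree set \<Rightarrow> ('a,'c) arg set" where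
  "ex_args k num D C F =
     ClassArg ` C
     \<union> {RuleArg T r | T r. T \<in> F \<and> r \<in> T}
     \<union> {FeatArg i S | i S. i < k \<and> S \<in> part_sets num D F i}"

definition ex_att ::
  "nat \<Rightarrow> (nat \<Rightarrow> bool) \<Rightarrow> (nat \<Rightarrow> 'a fval set) \<Rightarrow> 'c set \<Rightarrow> ('a,'c) tree set \<Rightarrow> (('a,'c) arg \<times> ('a,'c) arg) set" where
  "ex_att k num D C F =
     {(FeatArg i S, FeatArg i S') | i S S'.
        i < k \<and> S \<in> part_sets num D F i \<and> S' \<in> part_sets num D F i \<and> S \<noteq> S'}
     \<union> {(FeatArg i S, RuleArg T r) | i S T r.
        i < k \<and> S \<in> part_sets num D F i \<and> T \<in> F \<and> r \<in> T \<and>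
        (\<exists>l\<in>prem r. lit_feat l = i \<and> (\<forall>v\<in>S. \<not> lit_holds l v))}
     \<union> {(RuleArg T r, ClassArg y) | T r y. T \<in> F \<and> r \<in> T \<and> y \<in> C \<and> conc r \<noteq> y}"

definition ex_sup ::
  "nat \<Rightarrow> (nat \<Rightarrow> bool) \<Rightarrow> (nat \<Rightarrow> 'a fval set) \<Rightarrow> 'c set \<Rightarrow> ('a,'c) tree set \<Rightarrow> (('a,'c) arg \<times> ('a,'c) arg) set" where
  "ex_sup k num D C F =
     {(RuleArg T r, ClassArg y) | T r y. T \<in> F \<and> r \<in> T \<and> y \<in> C \<and> conc r = y}"

definition S_L ::
  "nat \<Rightarrow> (nat \<Rightarrow> bool) \<Rightarrow> (nat \<Rightarrow> 'a fval set) \<Rightarrow> ('a,'c) tree set \<Rightarrow> (('a,'c) arg \<Rightarrow> label)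
     \<Rightarrow> (nat \<Rightarrow> 'a fval) set" where
  "S_L k num D F L =
     {x. \<forall>i<k. x i \<in> (THE S. S \<in> part_sets num D F i \<and> L (FeatArg i S) = In)}"

end

theory Submission
  imports Defs
begin

lemma att_feat_iff:
  "(B, FeatArg i S) \<in> ex_att k num D C F \<longleftrightarrow>
   (\<exists>S'. B = FeatArg i S' \<and> i < k \<and> S' \<in> part_sets num D F i \<and> S \<in> part_sets num D F i \<and> S' \<noteq> S)"
  unfolding ex_att_def by auto

lemma att_rule_iff:
  "(B, RuleArg T r) \<in> ex_att k num D C F \<longleftrightarrow>
   (\<exists>i S. B = FeatArg i S \<and> i < k \<and> S \<in> part_sets num D F i \<and> T \<in> F \<and> r \<in> T \<and>
        (\<exists>l\<in>prem r. lit_feat l = i \<and> (\<forall>v\<in>S. \<not> lit_holds l v)))"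
  unfolding ex_att_def by blast

lemma sup_feat: "(B, FeatArg i S) \<notin> ex_sup k num D C F" unfolding ex_sup_def by auto
lemma sup_rule: "(B, RuleArg T r) \<notin> ex_sup k num D C F" unfolding ex_sup_def by auto

lemma finite_thresholds:
  assumes "random_forest k num D C F"
  shows "finite (thresholds F i)"
proof -
  define g :: "'a lit \<Rightarrow> real" where "g l = (case snd l of CLe _ t \<Rightarrow> t | CEq _ _ \<Rightarrow> 0)" for l
  have "thresholds F i \<subseteq> (\<Union>T\<in>F. \<Union>r\<in>T. g ` prem r)"
  proof
    fix t assume "t \<in> thresholds F i"
    then obtain T r p where "T \<in> F" "r \<in> T" "(p, CLe i t) \<in> prem r" unfolding thresholds_def by auto
    moreover have "t = g (p, CLe i t)" unfolding g_def by simp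
    ultimately show "t \<in> (\<Union>T\<in>F. \<Union>r\<in>T. g ` prem r)" by blast
  qed
  moreover have "finite (\<Union>T\<in>F. \<Union>r\<in>T. g ` prem r)"
    using assms unfolding random_forest_def decision_tree_def is_rule_def by auto
  ultimately show ?thesis by (rule finite_subset)
qed

lemma cell_cases:
  fixes vs :: "real list" and a :: real
  assumes "vs \<noteq> []"
  shows "a \<le> hd vs \<or> last vs < a \<or> (\<exists>j. 1 \<le> j \<and> j < length vs \<and> vs!(j-1) < a \<and> a \<le> vs!j)"
proof -
  { assume h1: "\<not> a \<le> hd vs" and h2: "\<not> last vs < a"
    have ex: "\<exists>j. j < length vs \<and> a \<le> vs!j"
      using h2 assms by (intro exI[of _ "length vs - 1"]) (auto simp: last_conv_nth)
    define j where "j = (LEAST j. j < length vs \<and> a \<le> vs!j)"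
    have j1: "j < length vs \<and> a \<le> vs!j" unfolding j_def by (rule LeastI_ex[OF ex])
    have "j \<noteq> 0" using j1 h1 assms by (metis hd_conv_nth)
    then have "\<not> (j-1 < length vs \<and> a \<le> vs!(j-1))" unfolding j_def
      by (intro not_less_Least) (simp add: j_def[symmetric])
    then have "\<exists>j. 1 \<le> j \<and> j < length vs \<and> vs!(j-1) < a \<and> a \<le> vs!j"
      using j1 \<open>j \<noteq> 0\<close> by (intro exI[of _ j]) auto }
  then show ?thesis by blast
qed

lemma cell_const:
  fixes vs :: "real list"
  assumes "sorted vs" "t \<in> set vs"
  shows "\<forall>a\<in>{..hd vs}. a \<le> t" and "\<forall>a\<in>{last vs<..}. t < a"
   and "1 \<le> j \<Longrightarrow> j < length vs \<Longrightarrow> (\<forall>a\<in>{vs!(j-1)<..vs!j}. a \<le> t) \<or> (\<forall>a\<in>{vs!(j-1)<..vs!j}. t < a)"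
proof -
  obtain s where s: "s < length vs" "t = vs!s" using assms(2) by (metis in_set_conv_nth)
  have ne: "vs \<noteq> []" using assms(2) by auto
  have "hd vs \<le> t" using s assms(1) ne by (simp add: hd_conv_nth sorted_nth_mono)
  then show "\<forall>a\<in>{..hd vs}. a \<le> t" by auto
  have "t \<le> last vs" using s assms(1) ne by (simp add: last_conv_nth sorted_nth_mono)
  then show "\<forall>a\<in>{last vs<..}. t < a" by auto
  assume j: "1 \<le> j" "j < length vs"
  show "(\<forall>a\<in>{vs!(j-1)<..vs!j}. a \<le> t) \<or> (\<forall>a\<in>{vs!(j-1)<..vs!j}. t < a)"
  proof (cases "j \<le> s")
    case True
    then have "vs!j \<le> t" using s assms(1) by (simp add: sorted_nth_mono)
    then show ?thesis by auto
  next
    case False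
    then have "t \<le> vs!(j-1)" using s j assms(1) by (simp add: sorted_nth_mono)
    then show ?thesis by auto
  qed
qed

lemma num_cells_cases:
  assumes "S \<in> num_cells D F i"
  obtains (e) "sorted_list_of_set (thresholds F i) = []" "S = D i"
   | (f) "sorted_list_of_set (thresholds F i) \<noteq> []" "S = D i \<inter> Num ` {..hd (sorted_list_of_set (thresholds F i))}"
   | (l) "sorted_list_of_set (thresholds F i) \<noteq> []" "S = D i \<inter> Num ` {last (sorted_list_of_set (thresholds F i))<..}"
   | (m) j where "sorted_list_of_set (thresholds F i) \<noteq> []" "1 \<le> j" "j < length (sorted_list_of_set (thresholds F i))"
       "S = D i \<inter> Num ` {sorted_list_of_set (thresholds F i) ! (j - 1)<..sorted_list_of_set (thresholds F i) ! j}"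
proof -
  define vs where "vs = sorted_list_of_set (thresholds F i)"
  have "(vs = [] \<and> S = D i) \<or> (vs \<noteq> [] \<and> (S = D i \<inter> Num ` {..hd vs} \<or> S = D i \<inter> Num ` {last vs<..} \<or>
     (\<exists>j. 1 \<le> j \<and> j < length vs \<and> S = D i \<inter> Num ` {vs ! (j - 1)<..vs ! j})))"
    using assms unfolding num_cells_def Let_def vs_def[symmetric]
    by (cases "vs = []") (simp_all, blast)
  then show ?thesis using that unfolding vs_def by blast
qed

lemma part_sets_sub:
  assumes "S \<in> part_sets num D F i" shows "S \<subseteq> D i"
proof -
  have "S \<in> num_cells D F i \<or> S \<in> {{v} | v. v \<in> D i}" using assms unfolding part_sets_def
    by (auto split: if_splits)
  then show ?thesis
  proof
    assume "S \<in> num_cells D F i"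
    then show ?thesis by (cases rule: num_cells_cases) auto
  qed auto
qed

lemma part_sets_ne:
  assumes "S \<in> part_sets num D F i" shows "S \<noteq> {}"
  using assms unfolding part_sets_def by auto

lemma finite_part_sets:
  assumes fs: "feature_space k num D" and rf: "random_forest k num D C F" and i: "i < k"
  shows "finite (part_sets num D F i)"
proof (cases "num i")
  case True
  define vs where "vs = sorted_list_of_set (thresholds F i)"
  have "finite {D i \<inter> Num ` {vs ! (j - 1)<..vs ! j} | j. 1 \<le> j \<and> j < length vs}"
    by (rule finite_image_set) simp
  then have "finite (num_cells D F i)" unfolding num_cells_def Let_def vs_def[symmetric] by simp
  then show ?thesis using True unfolding part_sets_def by simp
next
  case False
  then have "finite (D i)" using fs i unfolding feature_space_def by auto
  moreover have "{{v} | v. v \<in> D i} = (\<lambda>v. {v}) ` D i" by auto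
  ultimately have "finite {{v} | v. v \<in> D i}" by simp
  then show ?thesis using False unfolding part_sets_def by simp
qed

lemma part_sets_ex:
  assumes fs: "feature_space k num D" and i: "i < k"
  shows "\<exists>S. S \<in> part_sets num D F i"
proof -
  obtain d where d: "d \<in> D i" using fs i unfolding feature_space_def by auto
  show ?thesis
  proof (cases "num i")
    case False
    have "{d} \<in> {{v} | v. v \<in> D i}" using d by blast
    then have "{d} \<in> part_sets num D F i" using False unfolding part_sets_def by simp
    then show ?thesis by blast
  next
    case True
    then obtain a where a: "d = Num a" using fs i d unfolding feature_space_def by auto
    define vs where "vs = sorted_list_of_set (thresholds F i)"
    have "\<exists>S\<in>num_cells D F i. d \<in> S"
    proof (cases "vs = []")
      case True
      then have "num_cells D F i = {D i}" unfolding num_cells_def Let_def vs_def[symmetric] by simp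
      then show ?thesis using d by simp
    next
      case False
      have nc: "num_cells D F i = {D i \<inter> Num ` {..hd vs}}
        \<union> {D i \<inter> Num ` {vs ! (j - 1)<..vs ! j} | j. 1 \<le> j \<and> j < length vs}
        \<union> {D i \<inter> Num ` {last vs<..}}"
        using False unfolding num_cells_def Let_def vs_def[symmetric] by simp
      from cell_cases[OF False, of a] show ?thesis
      proof (elim disjE exE conjE)
        assume h: "a \<le> hd vs"
        have m: "D i \<inter> Num ` {..hd vs} \<in> num_cells D F i" unfolding nc by (rule UnI1, rule UnI1) simp
        have "d \<in> D i \<inter> Num ` {..hd vs}" using d a h by (simp add: image_iff)
        then show ?thesis using m by (rule bexI)
      next
        assume h: "last vs < a"
        have m: "D i \<inter> Num ` {last vs<..} \<in> num_cells D F i" unfolding nc by (rule UnI2) simp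
        have "d \<in> D i \<inter> Num ` {last vs<..}" using d a h by (simp add: image_iff)
        then show ?thesis using m by (rule bexI)
      next
        fix j assume j: "1 \<le> j" "j < length vs" "vs!(j-1) < a" "a \<le> vs!j"
        have m: "D i \<inter> Num ` {vs ! (j - 1)<..vs ! j} \<in> num_cells D F i" unfolding nc
          by (rule UnI1, rule UnI2, rule CollectI, rule exI[of _ j]) (use j(1,2) in simp)
        have "d \<in> D i \<inter> Num ` {vs ! (j - 1)<..vs ! j}" using d a j(3,4) by (simp add: image_iff)
        then show ?thesis using m by (rule bexI)
      qed
    qed
    then obtain S where "S \<in> num_cells D F i" "d \<in> S" by blast
    then have "S \<in> part_sets num D F i" using True unfolding part_sets_def by auto
    then show ?thesis by blast
  qed
qed

lemma lit_const:
  assumes fs: "feature_space k num D" and rf: "random_forest k num D C F"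
    and T: "T \<in> F" "r \<in> T" and l: "l \<in> prem r"
    and S: "S \<in> part_sets num D F (lit_feat l)"
    and v: "v \<in> S" and w: "w \<in> S"
  shows "lit_holds l v = lit_holds l w"
proof -
  obtain p c where pc: "l = (p, c)" by (cases l)
  have "\<forall>l\<in>prem r. cond_ok k num (snd l)" using rf T
    unfolding random_forest_def decision_tree_def is_rule_def by auto
  then have ok: "cond_ok k num c" using l pc by (metis snd_conv)
  show ?thesis
  proof (cases c)
    case (CEq i a)
    then have "\<not> num i" "lit_feat l = i" using ok pc unfolding cond_ok_def lit_feat_def by auto
    then show ?thesis using S v w unfolding part_sets_def by auto
  next
    case (CLe i t)
    then have ni: "num i" and li: "lit_feat l = i" and ik: "i < k"
      using ok pc unfolding cond_ok_def lit_feat_def by auto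
    have tt: "t \<in> thresholds F i" using T l pc CLe unfolding thresholds_def by blast
    define vs where "vs = sorted_list_of_set (thresholds F i)"
    have fin: "finite (thresholds F i)" by (rule finite_thresholds[OF rf])
    have tv: "t \<in> set vs" and sv: "sorted vs" using tt fin unfolding vs_def by auto
    then have ne: "vs \<noteq> []" by auto
    have Sc: "S \<in> num_cells D F i" using S ni li unfolding part_sets_def by auto
    have vD: "v \<in> D i" "w \<in> D i" using part_sets_sub[OF S] v w li by auto
    obtain a b where ab: "v = Num a" "w = Num b" using vD fs ni ik unfolding feature_space_def by blast
    have key: "(a \<le> t) = (b \<le> t)"
    proof -
      from Sc show ?thesis
      proof (cases rule: num_cells_cases)
        case e then show ?thesis using ne vs_def by simp
      next
        case f
        then have "S = D i \<inter> Num ` {..hd vs}" unfolding vs_def by simp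
        then have "a \<in> {..hd vs}" "b \<in> {..hd vs}" using v w ab by auto
        then show ?thesis using cell_const(1)[OF sv tv] by auto
      next
        case l
        then have "S = D i \<inter> Num ` {last vs<..}" unfolding vs_def by simp
        then have "a \<in> {last vs<..}" "b \<in> {last vs<..}" using v w ab by auto
        then show ?thesis using cell_const(2)[OF sv tv] by auto
      next
        case (m j)
        then have "S = D i \<inter> Num ` {vs ! (j - 1)<..vs ! j}" "1 \<le> j" "j < length vs"
          unfolding vs_def by simp_all
        then have "a \<in> {vs ! (j - 1)<..vs ! j}" "b \<in> {vs ! (j - 1)<..vs ! j}" "1 \<le> j" "j < length vs"
          using v w ab by auto
        then show ?thesis using cell_const(3)[OF sv tv, of j] by auto
      qed
    qed
    show ?thesis using key ab pc CLe unfolding lit_holds_def by auto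
  qed
qed

theorem lemma2:
  fixes k :: nat and num :: "nat \<Rightarrow> bool" and D :: "nat \<Rightarrow> 'a fval set"
    and C :: "'c set" and F :: "('a,'c) tree set" and L :: "('a,'c) arg \<Rightarrow> label"
  assumes "feature_space k num D"
    and "finite C"
    and "random_forest k num D C F"
    and "bi_stable (ex_args k num D C F) (ex_att k num D C F) (ex_sup k num D C F) L"
  shows "\<forall>T\<in>F.
           (\<forall>r\<in>T. L (RuleArg T r) = In \<longleftrightarrow> (\<forall>x\<in>S_L k num D F L. active_rule T x r))
         \<and> (\<exists>!r. r \<in> T \<and> L (RuleArg T r) = In)
         \<and> (\<forall>r\<in>T. L (RuleArg T r) \<noteq> In \<longrightarrow> L (RuleArg T r) = Out)"
proof -
  note fs = assms(1) and rf = assms(3)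
  let ?A = "ex_args k num D C F" and ?At = "ex_att k num D C F" and ?Sp = "ex_sup k num D C F"
  have bc: "\<And>A. A \<in> ?A \<Longrightarrow> (L A = In \<longleftrightarrow> ((\<forall>B\<in>attackers ?At A. L B = Out) \<or> sup_dominate ?At ?Sp L A))
     \<and> (L A = Out \<longleftrightarrow> att_dominate ?At ?Sp L A) \<and> L A \<noteq> Und"
    using assms(4) unfolding bi_stable_def bi_complete_def by blast
  define P where "P i = part_sets num D F i" for i
  have featarg: "FeatArg i S \<in> ?A" if "i < k" "S \<in> P i" for i S
    using that unfolding ex_args_def P_def by blast
  have rulearg: "RuleArg T r \<in> ?A" if "T \<in> F" "r \<in> T" for T r
    using that unfolding ex_args_def by blast
  have spF: "attackers ?Sp (FeatArg i S) = {}" for i S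
    unfolding attackers_def using sup_feat by blast
  have spR: "attackers ?Sp (RuleArg T r) = {}" for T r
    unfolding attackers_def using sup_rule by blast
  have atF: "attackers ?At (FeatArg i S) = FeatArg i ` {S'\<in>P i. S' \<noteq> S}" if "i < k" "S \<in> P i" for i S
    using that unfolding attackers_def P_def att_feat_iff by blast
  have feat_in: "L (FeatArg i S) = In \<longleftrightarrow> (\<forall>S'\<in>P i. S' \<noteq> S \<longrightarrow> L (FeatArg i S') = Out)"
    if "i < k" "S \<in> P i" for i S
    using bc[OF featarg[OF that]] unfolding sup_dominate_def spF atF[OF that] by auto
  have feat_out: "L (FeatArg i S) = Out \<longleftrightarrow> (\<exists>S'\<in>P i. S' \<noteq> S \<and> L (FeatArg i S') = In)"
    if "i < k" "S \<in> P i" for i S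
  proof -
    have fin: "finite (P i)" unfolding P_def using finite_part_sets[OF fs rf that(1)] .
    have "finite {B \<in> FeatArg i ` {S'\<in>P i. S' \<noteq> S}. L B = In}" using fin by auto
    then have "att_dominate ?At ?Sp L (FeatArg i S) \<longleftrightarrow> {B \<in> FeatArg i ` {S'\<in>P i. S' \<noteq> S}. L B = In} \<noteq> {}"
      unfolding att_dominate_def spF atF[OF that] by (simp add: card_gt_0_iff)
    also have "\<dots> \<longleftrightarrow> (\<exists>S'\<in>P i. S' \<noteq> S \<and> L (FeatArg i S') = In)" by blast
    finally show ?thesis using bc[OF featarg[OF that]] by blast
  qed
  have feat_nu: "L (FeatArg i S) \<noteq> Und" if "i < k" "S \<in> P i" for i S
    using bc[OF featarg[OF that]] by blast
  have ex1: "\<exists>!S. S \<in> P i \<and> L (FeatArg i S) = In" if i: "i < k" for i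
  proof -
    obtain S0 where S0: "S0 \<in> P i" using part_sets_ex[OF fs i] unfolding P_def by blast
    have "\<exists>S. S \<in> P i \<and> L (FeatArg i S) = In"
    proof (cases "L (FeatArg i S0) = In")
      case True then show ?thesis using S0 by blast
    next
      case False
      then have "L (FeatArg i S0) = Out" using feat_nu[OF i S0] by (cases "L (FeatArg i S0)") auto
      then show ?thesis using feat_out[OF i S0] by blast
    qed
    moreover have "S = S'" if "S \<in> P i" "L (FeatArg i S) = In" "S' \<in> P i" "L (FeatArg i S') = In" for S S'
    proof (rule ccontr)
      assume ne: "S \<noteq> S'"
      have "\<forall>S'\<in>P i. S' \<noteq> S \<longrightarrow> L (FeatArg i S') = Out" using feat_in[OF i that(1)] that(2) by simp
      then have "L (FeatArg i S') = Out" using that(3) ne by simp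
      then show False using that(4) by simp
    qed
    ultimately show ?thesis by blast
  qed
  define sel where "sel i = (THE S. S \<in> part_sets num D F i \<and> L (FeatArg i S) = In)" for i
  have sel: "sel i \<in> P i \<and> L (FeatArg i (sel i)) = In" if "i < k" for i
    using theI'[OF ex1[OF that]] unfolding sel_def P_def .
  have sel_iff: "L (FeatArg i S) = In \<longleftrightarrow> S = sel i" if "i < k" "S \<in> P i" for i S
    using ex1[OF that(1)] sel[OF that(1)] that(2) by blast
  have SL: "S_L k num D F L = {x. \<forall>i<k. x i \<in> sel i}"
    unfolding S_L_def sel_def ..
  have lfk: "lit_feat l < k" if "T \<in> F" "r \<in> T" "l \<in> prem r" for T r l
  proof -
    have "cond_ok k num (snd l)" using rf that
      unfolding random_forest_def decision_tree_def is_rule_def by blast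
    then show ?thesis unfolding cond_ok_def lit_feat_def by simp
  qed
  have selne: "sel i \<noteq> {}" if "i < k" for i
    using sel[OF that] part_sets_ne unfolding P_def by blast
  have rule_in: "L (RuleArg T r) = In \<longleftrightarrow> (\<forall>l\<in>prem r. \<exists>v\<in>sel (lit_feat l). lit_holds l v)"
    if T: "T \<in> F" "r \<in> T" for T r
  proof -
    have atR: "attackers ?At (RuleArg T r) = {FeatArg i S | i S. i < k \<and> S \<in> P i \<and>
        (\<exists>l\<in>prem r. lit_feat l = i \<and> (\<forall>v\<in>S. \<not> lit_holds l v))}"
      unfolding attackers_def att_rule_iff P_def using T by blast
    have "L (RuleArg T r) = In \<longleftrightarrow> (\<forall>B\<in>attackers ?At (RuleArg T r). L B = Out)"
      using bc[OF rulearg[OF T]] unfolding sup_dominate_def spR by auto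
    also have "\<dots> \<longleftrightarrow> (\<forall>i<k. \<forall>S\<in>P i. (\<exists>l\<in>prem r. lit_feat l = i \<and> (\<forall>v\<in>S. \<not> lit_holds l v)) \<longrightarrow> L (FeatArg i S) = Out)"
      unfolding atR by blast
    also have "\<dots> \<longleftrightarrow> (\<forall>i<k. \<forall>S\<in>P i. (\<exists>l\<in>prem r. lit_feat l = i \<and> (\<forall>v\<in>S. \<not> lit_holds l v)) \<longrightarrow> S \<noteq> sel i)"
    proof -
      have "L (FeatArg i S) = Out \<longleftrightarrow> S \<noteq> sel i" if "i < k" "S \<in> P i" for i S
        using sel_iff[OF that] feat_nu[OF that] by (cases "L (FeatArg i S)") auto
      then show ?thesis by blast
    qed
    also have "\<dots> \<longleftrightarrow> (\<forall>l\<in>prem r. \<exists>v\<in>sel (lit_feat l). lit_holds l v)"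
    proof
      assume H: "\<forall>i<k. \<forall>S\<in>P i. (\<exists>l\<in>prem r. lit_feat l = i \<and> (\<forall>v\<in>S. \<not> lit_holds l v)) \<longrightarrow> S \<noteq> sel i"
      show "\<forall>l\<in>prem r. \<exists>v\<in>sel (lit_feat l). lit_holds l v"
      proof
        fix l assume l: "l \<in> prem r"
        have ik: "lit_feat l < k" using lfk[OF T l] .
        show "\<exists>v\<in>sel (lit_feat l). lit_holds l v"
        proof (rule ccontr)
          assume "\<not> (\<exists>v\<in>sel (lit_feat l). lit_holds l v)"
          then have "\<forall>v\<in>sel (lit_feat l). \<not> lit_holds l v" by simp
          then have "\<exists>l'\<in>prem r. lit_feat l' = lit_feat l \<and> (\<forall>v\<in>sel (lit_feat l). \<not> lit_holds l' v)"
            using l by blast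
          moreover have "sel (lit_feat l) \<in> P (lit_feat l)" using sel[OF ik] by simp
          ultimately have "sel (lit_feat l) \<noteq> sel (lit_feat l)" using H ik by blast
          then show False by simp
        qed
      qed
    next
      assume G: "\<forall>l\<in>prem r. \<exists>v\<in>sel (lit_feat l). lit_holds l v"
      show "\<forall>i<k. \<forall>S\<in>P i. (\<exists>l\<in>prem r. lit_feat l = i \<and> (\<forall>v\<in>S. \<not> lit_holds l v)) \<longrightarrow> S \<noteq> sel i"
      proof (intro allI impI ballI notI)
        fix i S assume "i < k" "S \<in> P i" and ex: "\<exists>l\<in>prem r. lit_feat l = i \<and> (\<forall>v\<in>S. \<not> lit_holds l v)"
          and eq: "S = sel i"
        from ex obtain l where l: "l \<in> prem r" "lit_feat l = i" "\<forall>v\<in>S. \<not> lit_holds l v" by blast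
        from G l(1) obtain v where "v \<in> sel (lit_feat l)" "lit_holds l v" by blast
        then show False using l eq by simp
      qed
    qed
    finally show ?thesis .
  qed
  have good_iff: "(\<forall>l\<in>prem r. \<exists>v\<in>sel (lit_feat l). lit_holds l v) \<longleftrightarrow> (\<forall>x\<in>S_L k num D F L. sat_prem r x)"
    if T: "T \<in> F" "r \<in> T" for T r
  proof
    assume g: "\<forall>l\<in>prem r. \<exists>v\<in>sel (lit_feat l). lit_holds l v"
    show "\<forall>x\<in>S_L k num D F L. sat_prem r x"
      unfolding sat_prem_def
    proof (intro ballI)
      fix x l assume x: "x \<in> S_L k num D F L" and l: "l \<in> prem r"
      let ?i = "lit_feat l"
      have ik: "?i < k" using lfk[OF T l] .
      obtain v where v: "v \<in> sel ?i" "lit_holds l v" using g l by blast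
      have xi: "x ?i \<in> sel ?i" using x ik unfolding SL by blast
      have "sel ?i \<in> part_sets num D F ?i" using sel[OF ik] unfolding P_def by blast
      from lit_const[OF fs rf T l this v(1) xi] v(2) show "lit_holds l (x ?i)" by simp
    qed
  next
    assume h: "\<forall>x\<in>S_L k num D F L. sat_prem r x"
    show "\<forall>l\<in>prem r. \<exists>v\<in>sel (lit_feat l). lit_holds l v"
    proof
      fix l assume l: "l \<in> prem r"
      let ?i = "lit_feat l"
      have ik: "?i < k" using lfk[OF T l] .
      obtain v where v: "v \<in> sel ?i" using selne[OF ik] by blast
      define x where "x j = (if j = ?i then v else (SOME w. w \<in> sel j))" for j
      have "x \<in> S_L k num D F L" unfolding SL
      proof (safe)
        fix j assume "j < k"
        then show "x j \<in> sel j" unfolding x_def using v selne[of j] by (auto intro: someI_ex)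
      qed
      then have "lit_holds l (x ?i)" using h l unfolding sat_prem_def by blast
      then show "\<exists>v\<in>sel ?i. lit_holds l v" using v unfolding x_def by auto
    qed
  qed
  show ?thesis
  proof (rule ballI)
    fix T assume T: "T \<in> F"
    have main: "L (RuleArg T r) = In \<longleftrightarrow> (\<forall>x\<in>S_L k num D F L. active_rule T x r)" if r: "r \<in> T" for r
      using rule_in[OF T r] good_iff[OF T r] r unfolding active_rule_def by blast
    have c1: "\<forall>r\<in>T. L (RuleArg T r) = In \<longleftrightarrow> (\<forall>x\<in>S_L k num D F L. active_rule T x r)"
      using main by blast
    have c3: "\<forall>r\<in>T. L (RuleArg T r) \<noteq> In \<longrightarrow> L (RuleArg T r) = Out"
    proof (intro ballI impI)
      fix r assume r: "r \<in> T" and n: "L (RuleArg T r) \<noteq> In"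
      have "L (RuleArg T r) \<noteq> Und" using bc[OF rulearg[OF T r]] by blast
      then show "L (RuleArg T r) = Out" using n by (cases "L (RuleArg T r)") auto
    qed
    define x0 where "x0 j = (SOME w. w \<in> sel j)" for j
    have x0: "x0 \<in> S_L k num D F L" unfolding SL x0_def using selne by (auto simp: some_in_eq)
    have inp: "is_input k D x0"
    proof -
      have "x0 i \<in> D i" if "i < k" for i
        using x0 that sel[OF that] part_sets_sub unfolding SL P_def by blast
      then show ?thesis unfolding is_input_def by blast
    qed
    have dt: "decision_tree k num D C T" using rf T unfolding random_forest_def by blast
    then obtain r0 where r0: "r0 \<in> T" "sat_prem r0 x0"
      using inp unfolding decision_tree_def by blast
    have r0in: "L (RuleArg T r0) = In"
      unfolding rule_in[OF T r0(1)]
    proof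
      fix l assume l: "l \<in> prem r0"
      have "x0 (lit_feat l) \<in> sel (lit_feat l)" using x0 lfk[OF T r0(1) l] unfolding SL by blast
      moreover have "lit_holds l (x0 (lit_feat l))" using r0(2) l unfolding sat_prem_def by blast
      ultimately show "\<exists>v\<in>sel (lit_feat l). lit_holds l v" by blast
    qed
    have c2: "\<exists>!r. r \<in> T \<and> L (RuleArg T r) = In"
    proof (rule ex1I[of _ r0])
      show "r0 \<in> T \<and> L (RuleArg T r0) = In" using r0 r0in by blast
    next
      fix r assume r: "r \<in> T \<and> L (RuleArg T r) = In"
      then have "sat_prem r x0" using main x0 unfolding active_rule_def by blast
      then show "r = r0" using r r0 inp dt unfolding decision_tree_def by blast
    qed
    show "(\<forall>r\<in>T. L (RuleArg T r) = In \<longleftrightarrow> (\<forall>x\<in>S_L k num D F L. active_rule T x r))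
         \<and> (\<exists>!r. r \<in> T \<and> L (RuleArg T r) = In)
         \<and> (\<forall>r\<in>T. L (RuleArg T r) \<noteq> In \<longrightarrow> L (RuleArg T r) = Out)"
      by (rule conjI[OF c1 conjI[OF c2 c3]])
  qed
qed

end
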